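(* Let $\mathcal{O}$ be an order of $K$ and let $(r,\tau),(r',\tau')\in\mathbb{Z}/f\mathbb{Z}\times H^{\mathcal{O}}(\mathfrak{N})$. Put $\tau^*=\frac{-1}{fN\tau}$ and $\tau'^*=\frac{-1}{fN\tau'}$. Then $(r,\tau)\sim_f(r',\tau')$ if and only if $(r',\tau^* )\sim_f(r,\tau'^* )$.
   Context: $K$ real quadratic with discriminant $d_K$ and nontrivial automorphism $\sigma$; $N=\prod l_i^{e_i}$ with $l_i$ distinct primes split in $K$; $\mathfrak{N}=\prod\eta_i^{e_i}$ with $\eta_i$ a prime of $\mathcal{O}_K$ above $l_i$; $f$ a positive integer coprime to $Nd_K$. $\Lambda_\tau=\mathbb{Z}+\tau\mathbb{Z}$, $\mathcal{O}_\tau=\{\lambda\in K:\lambda\Lambda_\tau\subseteq\Lambda_\tau\}$. Product convention: $\mathfrak{N}\Lambda_\tau$ means $(\mathfrak{N}\cap\mathcal{O}_\tau)\Lambda_\tau$. $H(\mathfrak{N})=\{\tau\in K:\mathfrak{N}\Lambda_\tau=\Lambda_{N\tau},\ \tau-\tau^\sigma>0\}$ and $H^{\mathcal{O}}(\mathfrak{N})=\{\tau\in H(\mathfrak{N}):\mathcal{O}_\tau=\mathcal{O}\}$. For $(r,\tau),(r',\tau')\in\mathbb{Z}/f\mathbb{Z}\times(K\setminus\mathbb{Q})$, $(r,\tau)\sim_f(r',\tau')$ means there is $\gamma=\begin{pmatrix}a&b\\c&d\end{pmatrix}\in\Gamma_0(fN)$ with $d^{-1}r\equiv r'\pmod f$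 and $\tau'=\frac{a\tau+b}{c\tau+d}$. *)

theory Defs
  imports Complex_Main "HOL-Computational_Algebra.Polynomial" "HOL-Computational_Algebra.Squarefree"
begin

definition Kfield :: "int \<Rightarrow> real set" where
  "Kfield D = {x. \<exists>a b :: rat. x = of_rat a + of_rat b * sqrt (of_int D)}"

definition kconj :: "int \<Rightarrow> real \<Rightarrow> real" where
  "kconj D x = (THE y. \<exists>a b :: rat. x = of_rat a + of_rat b * sqrt (of_int D)
                              \<and> y = of_rat a - of_rat b * sqrt (of_int D))"

definition discK :: "int \<Rightarrow> int" where
  "discK D = (if D mod 4 = 1 then D else 4 * D)"

definition OK :: "int \<Rightarrow> real set" where
  "OK D = {x \<in> Kfield D. \<exists>p :: int poly. lead_coeff p = 1 \<and> poly (map_poly of_int p) x = 0}"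

definition lat_mult :: "real set \<Rightarrow> real set \<Rightarrow> real set" where
  "lat_mult A B = {\<Sum>i<n. x i * y i | (n::nat) x y. \<forall>i<n. x i \<in> A \<and> y i \<in> B}"

definition is_ideal :: "int \<Rightarrow> real set \<Rightarrow> bool" where
  "is_ideal D I \<longleftrightarrow> I \<subseteq> OK D \<and> 0 \<in> I \<and> (\<forall>x\<in>I. \<forall>y\<in>I. x + y \<in> I) \<and>
     (\<forall>x\<in>I. \<forall>a\<in>OK D. a * x \<in> I)"

definition prime_ideal :: "int \<Rightarrow> real set \<Rightarrow> bool" where
  "prime_ideal D P \<longleftrightarrow> is_ideal D P \<and> P \<noteq> OK D \<and> P \<noteq> {0} \<and>
     (\<forall>x\<in>OK D. \<forall>y\<in>OK D. x * y \<in> P \<longrightarrow> x \<in> P \<or> y \<in> P)"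

definition ideal_pow :: "int \<Rightarrow> real set \<Rightarrow> nat \<Rightarrow> real set" where
  "ideal_pow D I k = ((\<lambda>J. lat_mult I J) ^^ k) (OK D)"

definition splits_in :: "int \<Rightarrow> nat \<Rightarrow> bool" where
  "splits_in D l \<longleftrightarrow> (\<exists>P Q. prime_ideal D P \<and> prime_ideal D Q \<and> P \<noteq> Q \<and>
      lat_mult P Q = {of_nat l * x | x. x \<in> OK D})"

definition prime_above :: "int \<Rightarrow> real set \<Rightarrow> nat \<Rightarrow> bool" where
  "prime_above D P l \<longleftrightarrow> prime_ideal D P \<and> of_nat l \<in> P"

definition is_order :: "int \<Rightarrow> real set \<Rightarrow> bool" where
  "is_order D Od \<longleftrightarrow> Od \<subseteq> Kfield D \<and> 1 \<in> Od \<and>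
     (\<forall>x\<in>Od. \<forall>y\<in>Od. x + y \<in> Od \<and> x * y \<in> Od \<and> - x \<in> Od) \<and>
     (\<exists>\<alpha>\<in>Kfield D. \<exists>\<beta>\<in>Kfield D.
        (\<forall>m n :: int. of_int m * \<alpha> + of_int n * \<beta> = 0 \<longrightarrow> m = 0 \<and> n = 0) \<and>
        Od = {of_int m * \<alpha> + of_int n * \<beta> | (m::int) (n::int). True})"

definition Lat :: "real \<Rightarrow> real set" where
  "Lat \<tau> = {of_int m + of_int n * \<tau> | (m::int) (n::int). True}"

definition Ord_of :: "int \<Rightarrow> real \<Rightarrow> real set" where
  "Ord_of D \<tau> = {u \<in> Kfield D. (\<lambda>x. u * x) ` Lat \<tau> \<subseteq> Lat \<tau>}"

text \<open>Product convention: \<NN> Lambda_tau means (\<NN> \<inter> O_tau) Lambda_tau.\<close>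
definition H_set :: "int \<Rightarrow> real set \<Rightarrow> nat \<Rightarrow> real set" where
  "H_set D NN N = {\<tau> \<in> Kfield D. lat_mult (NN \<inter> Ord_of D \<tau>) (Lat \<tau>) = Lat (of_nat N * \<tau>)
                     \<and> \<tau> - kconj D \<tau> > 0}"

definition H_O_set :: "int \<Rightarrow> real set \<Rightarrow> nat \<Rightarrow> real set \<Rightarrow> real set" where
  "H_O_set D NN N Od = {\<tau> \<in> H_set D NN N. Ord_of D \<tau> = Od}"

text \<open>The relation \<sim>_f on Z/fZ \<times> (K - Q); residues mod f represented by integers.
  d^{-1} r = r' (mod f) is written with an explicit inverse d' of d modulo f.\<close>
definition sim_f :: "int \<Rightarrow> nat \<Rightarrow> nat \<Rightarrow> int \<times> real \<Rightarrow> int \<times> real \<Rightarrow> bool" where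
  "sim_f D f N p q = (case (p, q) of ((r, \<tau>), (r', \<tau>')) \<Rightarrow>
     \<tau> \<in> Kfield D - \<rat> \<and> \<tau>' \<in> Kfield D - \<rat> \<and>
     (\<exists>a b c d :: int. a * d - b * c = 1 \<and> int (f * N) dvd c \<and>
        (\<exists>d' :: int. (d * d') mod int f = 1 mod int f \<and> (d' * r) mod int f = r' mod int f) \<and>
        \<tau>' = (of_int a * \<tau> + of_int b) / (of_int c * \<tau> + of_int d)))"

end

theory Submission
  imports Defs
begin

lemma inv_K:
  assumes D: "D > 0" and x: "x \<in> Kfield D - \<rat>" and M: "M > (0::real)" and Mr: "M \<in> \<rat>"
  shows "-1 / (M * x) \<in> Kfield D - \<rat>"
proof -
  obtain a b where ab: "x = of_rat a + of_rat b * sqrt (of_int D)" using x unfolding Kfield_def by auto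
  define s where "s = sqrt (real_of_int D)"
  have s2: "s * s = of_int D" using D unfolding s_def by simp
  obtain m where m: "M = of_rat m" using Mr by (auto elim: Rats_cases)
  have xnq: "x \<notin> \<rat>" using x by auto
  have den: "a*a - of_int D * b*b \<noteq> 0"
  proof
    assume h: "a*a - of_int D * b*b = 0"
    show False
    proof (cases "b = 0")
      case True then have "a = 0" using h by simp
      then show False using xnq ab True by simp
    next
      case False
      have "(of_rat (a/b) :: real) * of_rat (a/b) = of_int D"
      proof -
        have "a/b * (a/b) = of_int D" using h False by (simp add: field_simps)
        then show ?thesis by (metis of_rat_mult of_rat_of_int_eq)
      qed
      hence "\<bar>of_rat (a/b)\<bar> = s" unfolding s_def
        by (metis abs_mult_self_eq real_sqrt_abs2)
      hence "s \<in> \<rat>" by (metis Rats_abs_iff Rats_of_rat)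
      hence "x \<in> \<rat>" using ab unfolding s_def by simp
      then show False using xnq by simp
    qed
  qed
  let ?d = "a*a - of_int D * b*b"
  have dr: "(of_rat ?d :: real) = of_rat a * of_rat a - of_int D * of_rat b * of_rat b"
    by (simp add: of_rat_mult of_rat_diff)
  have drn: "(of_rat ?d :: real) \<noteq> 0" using den by simp
  have xn0: "x \<noteq> 0" using xnq by auto
  have m0: "of_rat m \<noteq> (0::real)" using M m by simp
  have p1: "x * (of_rat a - of_rat b * s) = of_rat a * of_rat a - of_rat b * of_rat b * (s*s)"
    unfolding ab s_def[symmetric] by (simp add: algebra_simps)
  have prod: "x * (of_rat a - of_rat b * s) = of_rat ?d" unfolding p1 s2 dr by (simp only: mult.commute mult.left_commute)
  have eq: "-1 / (M * x) = of_rat (- a / (m * ?d)) + of_rat (b / (m * ?d)) * s"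
  proof -
    have "-1 / (M * x) = - (of_rat a - of_rat b * s) / (of_rat m * of_rat ?d)"
      using prod xn0 m0 drn m by (simp add: field_simps)
    also have "... = of_rat (- a / (m * ?d)) + of_rat (b / (m * ?d)) * s"
    proof -
      obtain R where R: "R = (of_rat ?d :: real)" by blast
      have c1: "of_rat (- a / (m * ?d)) = - of_rat a / (of_rat m * R)"
        unfolding R by (simp only: of_rat_divide of_rat_mult of_rat_minus)
      have c2: "of_rat (b / (m * ?d)) = of_rat b / (of_rat m * R)"
        unfolding R by (simp only: of_rat_divide of_rat_mult)
      have R0: "R \<noteq> 0" using R drn by simp
      show ?thesis unfolding c1 c2 R[symmetric] using R0 m0 by (simp add: field_simps)
    qed
    finally show ?thesis .
  qed
  have inK: "-1 / (M * x) \<in> Kfield D" unfolding Kfield_def s_def[symmetric] using eq by blast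
  have "-1 / (M * x) \<notin> \<rat>"
  proof
    assume "-1 / (M * x) \<in> \<rat>"
    hence "(-1) / (-1 / (M * x)) / M \<in> \<rat>" using Mr by (metis Rats_divide Rats_minus_iff Rats_1)
    moreover have "-1 / (-1 / (M * x)) / M = x" using xn0 M by (simp add: field_simps)
    ultimately show False using xnq by simp
  qed
  with inK show ?thesis by simp
qed

lemma fwd:
  assumes D: "D > 0" and M: "int (f*N) > 0"
    and h: "sim_f D f N (r, \<tau>) (r', \<tau>')"
  shows "sim_f D f N (r', -1 / (of_nat (f * N) * \<tau>)) (r, -1 / (of_nat (f * N) * \<tau>'))"
proof -
  let ?M = "int (f*N)"
  from h obtain a b c d d0 where t: "\<tau> \<in> Kfield D - \<rat>" "\<tau>' \<in> Kfield D - \<rat>"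
    and det: "a*d - b*c = 1" and dv: "?M dvd c" and inv: "(d*d0) mod int f = 1 mod int f"
    and rr: "(d0*r) mod int f = r' mod int f"
    and eq: "\<tau>' = (of_int a * \<tau> + of_int b) / (of_int c * \<tau> + of_int d)"
    unfolding sim_f_def by auto
  obtain k where k: "c = ?M * k" using dv by blast
  have "f*N > 0" using M by linarith
  hence Mr: "real (f*N) > 0" "real (f*N) \<in> \<rat>" by (simp_all only: of_nat_0_less_iff Rats_of_nat)
  have t1: "-1 / (real (f*N) * \<tau>) \<in> Kfield D - \<rat>" using inv_K[OF D t(1) Mr] .
  have t2: "-1 / (real (f*N) * \<tau>') \<in> Kfield D - \<rat>" using inv_K[OF D t(2) Mr] .
  have t0: "\<tau> \<noteq> 0" "\<tau>' \<noteq> 0" using t by auto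
  have cd: "of_int c * \<tau> + of_int d \<noteq> 0" using eq t0 by auto
  have ab: "of_int a * \<tau> + of_int b \<noteq> 0" using eq t0 by auto
  have e: "(-k)*(-b*?M) = b*c" unfolding k by (simp only: mult_minus_left mult_minus_right minus_minus mult_ac)
  have det2: "d*a - (-k)*(-b*?M) = 1" unfolding e using det by (simp only: mult.commute)
  have dv2: "?M dvd (-b*?M)" by simp
  have fdc: "int f dvd c" using k by (simp add: mult.assoc)
  have inv2: "(a*d) mod int f = 1 mod int f"
  proof -
    have "a*d = 1 + b*c" using det by simp
    also have "b*c = int f * (b * int N * k)" unfolding k by (simp add: mult_ac)
    finally have "a*d = 1 + int f * (b * int N * k)" .
    then show ?thesis by simp
  qed
  have rr2: "(d*r') mod int f = r mod int f"
  proof -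
    have "(d*r') mod int f = (d*(d0*r)) mod int f" using rr by (metis mod_mult_right_eq)
    also have "... = ((d*d0)*r) mod int f" by (simp add: mult.assoc)
    also have "... = (1*r) mod int f" using inv by (metis mod_mult_left_eq)
    finally show ?thesis by simp
  qed
  have Mn: "real (f*N) \<noteq> 0" using Mr(1) by linarith
  have ck: "real_of_int c = real (f*N) * of_int k" using k by simp
  have eq2: "-1 / (real (f*N) * \<tau>') =
     (of_int d * (-1 / (real (f*N) * \<tau>)) + of_int (-k)) /
     (of_int (-b*?M) * (-1 / (real (f*N) * \<tau>)) + of_int a)"
  proof -
    obtain A where A: "A = real (f*N)" by blast
    have cA: "real_of_int c = A * of_int k" using ck A by simp
    have bA: "real_of_int (-b*?M) = - of_int b * A" using A by simp
    have A0: "A \<noteq> 0" using Mn A by simp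
    have n1: "of_int d * (-1 / (A * \<tau>)) + of_int (-k) = -(of_int c * \<tau> + of_int d) / (A * \<tau>)"
      unfolding cA using A0 t0 by (simp add: field_simps)
    have n2: "of_int (-b*?M) * (-1 / (A * \<tau>)) + of_int a = (of_int a * \<tau> + of_int b) / \<tau>"
      unfolding bA using A0 t0 by (simp add: field_simps)
    have "-1 / (A * \<tau>') = -(of_int c * \<tau> + of_int d) / (A * \<tau>) / ((of_int a * \<tau> + of_int b) / \<tau>)"
    proof -
      obtain Y Z where Y: "Y = of_int a * \<tau> + of_int b" and Z: "Z = of_int c * \<tau> + of_int d" by blast
      have Y0: "Y \<noteq> 0" and Z0: "Z \<noteq> 0" using Y Z cd ab by auto
      have "-1 / (A * (Y / Z)) = -Z / (A * Y)" using Y0 Z0 A0 by (simp add: field_simps)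
      moreover have "-Z / (A * \<tau>) / (Y / \<tau>) = -Z / (A * Y)" using Y0 t0 A0 by (simp add: field_simps)
      ultimately show ?thesis unfolding eq Y[symmetric] Z[symmetric] by simp
    qed
    then show ?thesis unfolding A[symmetric] n1 n2 .
  qed
  show ?thesis unfolding sim_f_def using t1 t2 det2 dv2 inv2 rr2 eq2
    by (simp only: prod.case) blast
qed
theorem lemma9p1:
  fixes D :: int and ls :: "nat list" and e :: "nat \<Rightarrow> nat" and \<eta> :: "nat \<Rightarrow> real set"
    and N f :: nat and NN Od :: "real set" and r r' :: int and \<tau> \<tau>' :: real
  assumes "squarefree D" and "D > 1"
    and "distinct ls"
    and "\<forall>l\<in>set ls. prime l \<and> splits_in D l \<and> prime_above D (\<eta> l) l \<and> e l \<ge> 1"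
    and "N = (\<Prod>l\<leftarrow>ls. l ^ e l)"
    and "NN = foldr (\<lambda>l J. lat_mult (ideal_pow D (\<eta> l) (e l)) J) ls (OK D)"
    and "f > 0" and "coprime (int f) (int N * discK D)"
    and "is_order D Od"
    and "\<tau> \<in> H_O_set D NN N Od" and "\<tau>' \<in> H_O_set D NN N Od"
  shows "sim_f D f N (r, \<tau>) (r', \<tau>') \<longleftrightarrow>
         sim_f D f N (r', -1 / (of_nat (f * N) * \<tau>)) (r, -1 / (of_nat (f * N) * \<tau>'))"
proof -
  have Npos: "N > 0"
    using assms(4) unfolding assms(5)
    by (induction ls) (auto simp: prime_gt_0_nat)
  have Mp: "int (f*N) > 0" using Npos assms(7) by simp
  have D0: "D > 0" using assms(2) by simp
  have inv: "-1 / (real (f*N) * (-1 / (real (f*N) * x))) = x" for x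
  proof -
    have "real (f*N) \<noteq> 0" using Npos assms(7) by simp
    then show ?thesis by (cases "x = 0") (auto simp: field_simps)
  qed
  show ?thesis
  proof
    assume "sim_f D f N (r, \<tau>) (r', \<tau>')"
    then show "sim_f D f N (r', -1 / (of_nat (f * N) * \<tau>)) (r, -1 / (of_nat (f * N) * \<tau>'))"
      using fwd[OF D0 Mp] by blast
  next
    assume "sim_f D f N (r', -1 / (of_nat (f * N) * \<tau>)) (r, -1 / (of_nat (f * N) * \<tau>'))"
    from fwd[OF D0 Mp this] show "sim_f D f N (r, \<tau>) (r', \<tau>')" by (simp only: inv)
  qed
qed

end
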